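(* Let $\lambda>0$, $p\in(0,1]$, $\alpha>2$, $d>0$, $\theta>0$, $R=\log(1+\theta)$, and $\lambda_{max}=\frac{1}{d^2\theta^{2/\alpha}\kappa(\alpha)}$ with $\kappa(\alpha)=\frac{2\pi^2}{\alpha\sin(2\pi/\alpha)}$. For $q\in(0,1]$ let $r(q)=\min\{p/q,1\}$ and $$C(q)=\lambda\, r(q)\, q\,\exp\!\Big(-\frac{\lambda\, r(q)\, q}{\lambda_{max}}\Big)R .$$ If $p>\frac{\lambda_{max}}{\lambda}$, then $q^\star=\frac{\lambda_{max}}{\lambda}$ maximizes $C$ over $(0,1]$. Otherwise (i.e. if $p\le \frac{\lambda_{max}}{\lambda}$), every $q\in[p,1]$ maximizes $C$ over $(0,1]$.
   Context: Model: transmitters of a wireless ad hoc network are located according to a homogeneous Poisson point process of density $\lambda$ in $\mathbb{R}^2$, each with its receiver at distance $d$; path-loss exponent $\alpha$, Rayleigh fading, interference-limited, and a transmission succeeds if the signal-to-interference ratio exceeds $\theta$. Each transmitter harvests one unit of energy per time slot with probability $p$ (i.i.d. Bernoulli), stores it in a battery of infinite capacity, and, whenever its stored energy is at least $1$, transmits with unit power (spending one unit) with probability $q$ (ALOHA). The stationary probability that the battery is nonempty is $r(q)=\min\{p/q,1\}$, and the transmission capacity (density of active transmitters times success probability times rate $R$) equals $C(q)$ above. The ALOHA transmission probability is called optimal if it maximizes $C$. *)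

theory Defs
  imports "HOL-Analysis.Analysis"
begin

definition kappa :: "real \<Rightarrow> real" where
  "kappa \<alpha> = 2 * pi\<^sup>2 / (\<alpha> * sin (2 * pi / \<alpha>))"

definition lambda_max :: "real \<Rightarrow> real \<Rightarrow> real \<Rightarrow> real" where
  "lambda_max d \<theta> \<alpha> = 1 / (d\<^sup>2 * \<theta> powr (2 / \<alpha>) * kappa \<alpha>)"

definition rate :: "real \<Rightarrow> real" where
  "rate \<theta> = ln (1 + \<theta>)"

definition rprob :: "real \<Rightarrow> real \<Rightarrow> real" where
  "rprob p q = min (p / q) 1"

definition tcap :: "real \<Rightarrow> real \<Rightarrow> real \<Rightarrow> real \<Rightarrow> real \<Rightarrow> real \<Rightarrow> real" where
  "tcap lam p \<alpha> d \<theta> q =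
     lam * rprob p q * q * exp (- (lam * rprob p q * q / lambda_max d \<theta> \<alpha>)) * rate \<theta>"

definition maximizes_on :: "(real \<Rightarrow> real) \<Rightarrow> real set \<Rightarrow> real \<Rightarrow> bool" where
  "maximizes_on f S x \<longleftrightarrow> x \<in> S \<and> (\<forall>y\<in>S. f y \<le> f x)"

end

theory Submission
  imports Defs
begin

lemma rq: "q > 0 \<Longrightarrow> p > 0 \<Longrightarrow> rprob p q * q = min p q"
  unfolding rprob_def by (auto simp: min_def field_simps)

lemma mono_xe:
  fixes L x y :: real
  assumes "L > 0" "0 \<le> y" "y \<le> x" "x \<le> L"
  shows "y * exp (- (y / L)) \<le> x * exp (- (x / L))"
proof -
  have e: "exp (- (x / L)) = exp (- (y / L)) * exp ((y - x) / L)"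
    by (simp add: exp_add[symmetric] field_simps diff_divide_distrib)
  have b: "1 + (y - x) / L \<le> exp ((y - x) / L)" by (rule exp_ge_add_one_self)
  have c: "y \<le> x * (1 + (y - x) / L)"
  proof -
    have "(x - y) * (L - x) \<ge> 0" using assms by simp
    hence "y * L \<le> x * (L + (y - x))" by (simp add: algebra_simps)
    thus ?thesis using assms by (simp add: field_simps)
  qed
  have "x * (1 + (y - x) / L) \<le> x * exp ((y - x) / L)"
    using b assms by (intro mult_left_mono) auto
  hence "y \<le> x * exp ((y - x) / L)" using c by linarith
  hence "y * exp (- (y / L)) \<le> x * exp ((y - x) / L) * exp (- (y / L))"
    by (intro mult_right_mono) auto
  thus ?thesis using e by (simp add: mult_ac)
qed

lemma max_xe:
  fixes L x :: real
  assumes "L > 0" "0 \<le> x"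
  shows "x * exp (- (x / L)) \<le> L * exp (- (L / L))"
proof -
  have b: "1 + (x / L - 1) \<le> exp (x / L - 1)" by (rule exp_ge_add_one_self)
  have "x = L * (1 + (x / L - 1))" using assms by simp
  also have "\<dots> \<le> L * exp (x / L - 1)" using b assms by (intro mult_left_mono) auto
  finally have "x * exp (- (x / L)) \<le> L * exp (x / L - 1) * exp (- (x / L))"
    by (intro mult_right_mono) auto
  also have "\<dots> = L * exp (-1)" by (simp add: exp_add[symmetric] mult.assoc)
  finally show ?thesis using assms by simp
qed

theorem theorem1:
  fixes lam p \<alpha> d \<theta> :: real
  assumes "lam > 0" and "0 < p" and "p \<le> 1" and "\<alpha> > 2" and "d > 0" and "\<theta> > 0"
  shows "(p > lambda_max d \<theta> \<alpha> / lam \<longrightarrow>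
           maximizes_on (tcap lam p \<alpha> d \<theta>) {0<..1} (lambda_max d \<theta> \<alpha> / lam))
       \<and> (p \<le> lambda_max d \<theta> \<alpha> / lam \<longrightarrow>
           (\<forall>q\<in>{p..1}. maximizes_on (tcap lam p \<alpha> d \<theta>) {0<..1} q))"
proof -
  define L where "L = lambda_max d \<theta> \<alpha>"
  have s: "sin (2 * pi / \<alpha>) > 0"
    using assms(4) by (intro sin_gt_zero) (auto simp: field_simps)
  have k: "kappa \<alpha> > 0" unfolding kappa_def using s assms(4) by simp
  have L: "L > 0" unfolding L_def lambda_max_def using k assms by simp
  have R: "rate \<theta> > 0" unfolding rate_def using assms by simp
  have T: "tcap lam p \<alpha> d \<theta> q = (lam * min p q) * exp (- (lam * min p q / L)) * rate \<theta>"
    if "q > 0" for q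
    unfolding tcap_def L_def using rq[OF that assms(2)] by (simp add: mult.assoc)
  have 1: "maximizes_on (tcap lam p \<alpha> d \<theta>) {0<..1} (L / lam)" if h: "p > L / lam"
  proof -
    have q0: "L / lam > 0" using L assms by simp
    have mq: "lam * min p (L / lam) = L" using h assms by (simp add: min_def)
    show ?thesis unfolding maximizes_on_def
    proof (intro conjI ballI)
      show "L / lam \<in> {0<..1}" using q0 h assms(3) by auto
      fix y :: real assume y: "y \<in> {0<..1}"
      have "lam * min p y \<ge> 0" using y assms by simp
      hence "(lam * min p y) * exp (- (lam * min p y / L)) \<le> L * exp (- (L / L))"
        using max_xe L by blast
      thus "tcap lam p \<alpha> d \<theta> y \<le> tcap lam p \<alpha> d \<theta> (L / lam)"
        using T[of y] T[OF q0] y mq R by (simp add: mult_right_mono)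
    qed
  qed
  have 2: "maximizes_on (tcap lam p \<alpha> d \<theta>) {0<..1} q" if h: "p \<le> L / lam" and q: "q \<in> {p..1}" for q
  proof -
    have q0: "q > 0" using q assms by auto
    have mq: "min p q = p" using q by auto
    show ?thesis unfolding maximizes_on_def
    proof (intro conjI ballI)
      show "q \<in> {0<..1}" using q0 q by auto
      fix y :: real assume y: "y \<in> {0<..1}"
      have "lam * p \<le> L" using h assms by (simp add: field_simps)
      moreover have "lam * min p y \<le> lam * p" "0 \<le> lam * min p y"
        using y assms by auto
      ultimately have "(lam * min p y) * exp (- (lam * min p y / L)) \<le> (lam * p) * exp (- (lam * p / L))"
        using mono_xe L by blast
      thus "tcap lam p \<alpha> d \<theta> y \<le> tcap lam p \<alpha> d \<theta> q"
        using T[of y] T[OF q0] y mq R by (simp add: mult_right_mono)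
    qed
  qed
  show ?thesis using 1 2 unfolding L_def by blast
qed

end
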